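(* Let $f_n=[\psi_1,\psi_1^*]\cdots[\psi_n,\psi_n^*]\in\mathrm{Cl}_q(n,k)$, where $[A,B]=AB-BA$, and let $\mathrm{Cl}_q^+(n,k)$ be the subalgebra generated by the elements of even degree for the $\mathbb{Z}_2$-grading. Let $\pi\colon\mathrm{Cl}_q(n,k)\to\mathrm{End}(W)$ be an irreducible representation. Then $W=W^+\oplus W^-$ with $W^\pm=(1\pm\pi(f_n))(W)$, and each $W^\pm$ is invariant under $\mathrm{Cl}_q^+(n,k)$.
   Context: Let $\mathbb{k}$ be a field of characteristic different from $2$, let $q\in\mathbb{k}^\times$, and let $n,k$ be positive integers. The quantum Clifford algebra $\mathrm{Cl}_q(n,k)$ is the unital associative $\mathbb{k}$-algebra generated by $\psi_a,\psi_a^*,\omega_a,\omega_a^{-1}$ for $a\in\{1,\dots,n\}$, subject to the relations (for all $a,b\in\{1,\dots,n\}$): $\omega_a\omega_b=\omega_b\omega_a$; $\omega_a\omega_a^{-1}=1$; $\omega_a\psi_b=q^{\delta_{ab}}\psi_b\omega_a$; $\omega_a\psi_b^*=q^{-\delta_{ab}}\psi_b^*\omega_a$; $\psi_a\psi_b+\psi_b\psi_a=0$; $\psi_a^*\psi_b^*+\psi_b^*\psi_a^*=0$; $\psi_a\psi_a^*+q^k\psi_a^*\psi_a=\omega_a^{-k}$; $\psi_a\psi_a^*+q^{-k}\psi_a^*\psi_a=\omega_a^{k}$; and $\psi_a\psi_b^*+\psi_b^*\psi_a=0$ if $a\neq b$. The $\mathbb{Z}_2$-grading (superalgebra structure) is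 given by declaring $\psi_a,\psi_a^*$ odd and $\omega_a^{\pm1}$ even. *)

theory Defs
  imports Complex_Main
begin

text \<open>Expressions in the generators of the quantum Clifford algebra Cl_q(n,k)
  (elements of the free algebra); the algebra is their image modulo the relations.
  A representation pi of Cl_q(n,k) on W is, by the universal property of the
  presented algebra, the same as operators on W satisfying the defining relations;
  pi of an expression is its evaluation.\<close>

datatype 'k clexpr =
    GPsi nat | GPsiS nat | GOm nat | GOmInv nat
  | COne | CScal 'k "'k clexpr" | CAdd "'k clexpr" "'k clexpr" | CMul "'k clexpr" "'k clexpr"

inductive cl_expr :: "nat \<Rightarrow> 'k clexpr \<Rightarrow> bool" for n where
  "a \<in> {1..n} \<Longrightarrow> cl_expr n (GPsi a)"
| "a \<in> {1..n} \<Longrightarrow> cl_expr n (GPsiS a)"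
| "a \<in> {1..n} \<Longrightarrow> cl_expr n (GOm a)"
| "a \<in> {1..n} \<Longrightarrow> cl_expr n (GOmInv a)"
| "cl_expr n COne"
| "cl_expr n e \<Longrightarrow> cl_expr n (CScal c e)"
| "cl_expr n e1 \<Longrightarrow> cl_expr n e2 \<Longrightarrow> cl_expr n (CAdd e1 e2)"
| "cl_expr n e1 \<Longrightarrow> cl_expr n e2 \<Longrightarrow> cl_expr n (CMul e1 e2)"

text \<open>The elements of even degree of Cl_q(n,k) are exactly the images of the even
  expressions, and these already form a subalgebra, so Cl_q^+(n,k) is their image.\<close>
inductive cl_even :: "nat \<Rightarrow> 'k clexpr \<Rightarrow> bool" and cl_odd :: "nat \<Rightarrow> 'k clexpr \<Rightarrow> bool"
  for n where
  "a \<in> {1..n} \<Longrightarrow> cl_odd n (GPsi a)"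
| "a \<in> {1..n} \<Longrightarrow> cl_odd n (GPsiS a)"
| "a \<in> {1..n} \<Longrightarrow> cl_even n (GOm a)"
| "a \<in> {1..n} \<Longrightarrow> cl_even n (GOmInv a)"
| "cl_even n COne"
| "cl_even n e \<Longrightarrow> cl_even n (CScal c e)"
| "cl_odd n e \<Longrightarrow> cl_odd n (CScal c e)"
| "cl_even n e1 \<Longrightarrow> cl_even n e2 \<Longrightarrow> cl_even n (CAdd e1 e2)"
| "cl_odd n e1 \<Longrightarrow> cl_odd n e2 \<Longrightarrow> cl_odd n (CAdd e1 e2)"
| "cl_even n e1 \<Longrightarrow> cl_even n e2 \<Longrightarrow> cl_even n (CMul e1 e2)"
| "cl_odd n e1 \<Longrightarrow> cl_odd n e2 \<Longrightarrow> cl_even n (CMul e1 e2)"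
| "cl_even n e1 \<Longrightarrow> cl_odd n e2 \<Longrightarrow> cl_odd n (CMul e1 e2)"
| "cl_odd n e1 \<Longrightarrow> cl_even n e2 \<Longrightarrow> cl_odd n (CMul e1 e2)"

fun cl_eval :: "('k \<Rightarrow> 'v \<Rightarrow> 'v) \<Rightarrow> (nat \<Rightarrow> 'v \<Rightarrow> 'v) \<Rightarrow> (nat \<Rightarrow> 'v \<Rightarrow> 'v)
    \<Rightarrow> (nat \<Rightarrow> 'v \<Rightarrow> 'v) \<Rightarrow> (nat \<Rightarrow> 'v \<Rightarrow> 'v) \<Rightarrow> 'k clexpr \<Rightarrow> ('v::ab_group_add \<Rightarrow> 'v)" where
  "cl_eval sc Psi PsiS Om OmI (GPsi a) = Psi a"
| "cl_eval sc Psi PsiS Om OmI (GPsiS a) = PsiS a"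
| "cl_eval sc Psi PsiS Om OmI (GOm a) = Om a"
| "cl_eval sc Psi PsiS Om OmI (GOmInv a) = OmI a"
| "cl_eval sc Psi PsiS Om OmI COne = id"
| "cl_eval sc Psi PsiS Om OmI (CScal c e) = (\<lambda>v. sc c (cl_eval sc Psi PsiS Om OmI e v))"
| "cl_eval sc Psi PsiS Om OmI (CAdd e1 e2) =
     (\<lambda>v. cl_eval sc Psi PsiS Om OmI e1 v + cl_eval sc Psi PsiS Om OmI e2 v)"
| "cl_eval sc Psi PsiS Om OmI (CMul e1 e2) =
     cl_eval sc Psi PsiS Om OmI e1 \<circ> cl_eval sc Psi PsiS Om OmI e2"

definition qcl_rep ::
  "('k::field \<Rightarrow> 'v::ab_group_add \<Rightarrow> 'v) \<Rightarrow> 'k \<Rightarrow> nat \<Rightarrow> nat \<Rightarrow> (nat \<Rightarrow> 'v \<Rightarrow> 'v)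
    \<Rightarrow> (nat \<Rightarrow> 'v \<Rightarrow> 'v) \<Rightarrow> (nat \<Rightarrow> 'v \<Rightarrow> 'v) \<Rightarrow> (nat \<Rightarrow> 'v \<Rightarrow> 'v) \<Rightarrow> bool" where
  "qcl_rep sc q n k Psi PsiS Om OmI \<longleftrightarrow>
     Vector_Spaces.vector_space sc \<and>
     (\<forall>a\<in>{1..n}. Vector_Spaces.linear sc sc (Psi a) \<and> Vector_Spaces.linear sc sc (PsiS a)
        \<and> Vector_Spaces.linear sc sc (Om a) \<and> Vector_Spaces.linear sc sc (OmI a)) \<and>
     (\<forall>a\<in>{1..n}. \<forall>b\<in>{1..n}. \<forall>v.
        Om a (Om b v) = Om b (Om a v)
      \<and> Om a (OmI a v) = v \<and> OmI a (Om a v) = v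
      \<and> Om a (Psi b v) = sc (if a = b then q else 1) (Psi b (Om a v))
      \<and> Om a (PsiS b v) = sc (if a = b then inverse q else 1) (PsiS b (Om a v))
      \<and> Psi a (Psi b v) + Psi b (Psi a v) = 0
      \<and> PsiS a (PsiS b v) + PsiS b (PsiS a v) = 0
      \<and> Psi a (PsiS a v) + sc (q ^ k) (PsiS a (Psi a v)) = (OmI a ^^ k) v
      \<and> Psi a (PsiS a v) + sc (inverse q ^ k) (PsiS a (Psi a v)) = (Om a ^^ k) v
      \<and> (a \<noteq> b \<longrightarrow> Psi a (PsiS b v) + PsiS b (Psi a v) = 0))"

definition qcl_irreducible ::
  "('k::field \<Rightarrow> 'v::ab_group_add \<Rightarrow> 'v) \<Rightarrow> nat \<Rightarrow> (nat \<Rightarrow> 'v \<Rightarrow> 'v)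
    \<Rightarrow> (nat \<Rightarrow> 'v \<Rightarrow> 'v) \<Rightarrow> (nat \<Rightarrow> 'v \<Rightarrow> 'v) \<Rightarrow> (nat \<Rightarrow> 'v \<Rightarrow> 'v) \<Rightarrow> bool" where
  "qcl_irreducible sc n Psi PsiS Om OmI \<longleftrightarrow>
     (\<exists>v::'v. v \<noteq> 0) \<and>
     (\<forall>U. Modules.module.subspace sc U \<and>
          (\<forall>e. cl_expr n e \<longrightarrow> cl_eval sc Psi PsiS Om OmI e ` U \<subseteq> U)
        \<longrightarrow> U = {0} \<or> U = UNIV)"

definition op_comm :: "('v::ab_group_add \<Rightarrow> 'v) \<Rightarrow> ('v \<Rightarrow> 'v) \<Rightarrow> 'v \<Rightarrow> 'v" where
  "op_comm A B = (\<lambda>v. A (B v) - B (A v))"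

definition qcl_fn :: "nat \<Rightarrow> (nat \<Rightarrow> 'v::ab_group_add \<Rightarrow> 'v) \<Rightarrow> (nat \<Rightarrow> 'v \<Rightarrow> 'v) \<Rightarrow> 'v \<Rightarrow> 'v" where
  "qcl_fn n Psi PsiS = foldr (\<lambda>a acc. op_comm (Psi a) (PsiS a) \<circ> acc) [1..<Suc n] id"

end

theory Submission
  imports Defs
begin

locale qr =
  fixes sc :: "'k::field \<Rightarrow> 'v::ab_group_add \<Rightarrow> 'v" and q :: 'k and n k :: nat
    and Psi PsiS Om OmI :: "nat \<Rightarrow> 'v \<Rightarrow> 'v"
  assumes two_nz: "(2::'k) \<noteq> 0"
    and q_nz: "q \<noteq> 0"
    and rep: "qcl_rep sc q n k Psi PsiS Om OmI"
begin

lemma vs: "vector_space sc" using rep by (simp add: qcl_rep_def)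

sublocale V: vector_space sc by (rule vs)

definition lin_op :: "('v \<Rightarrow> 'v) \<Rightarrow> bool" where
  "lin_op f \<longleftrightarrow> (\<forall>x y. f (x+y) = f x + f y) \<and> (\<forall>c x. f (sc c x) = sc c (f x))"

lemma lin_add: "lin_op f \<Longrightarrow> f (x+y) = f x + f y" by (simp add: lin_op_def)
lemma lin_scale: "lin_op f \<Longrightarrow> f (sc c x) = sc c (f x)" by (simp add: lin_op_def)
lemma lin_zero: "lin_op f \<Longrightarrow> f 0 = 0"
  by (metis add_cancel_right_right lin_add add_0)
lemma lin_neg: "lin_op f \<Longrightarrow> f (- x) = - f x"
  by (metis add_eq_0_iff lin_add lin_zero neg_eq_iff_add_eq_0 add.right_inverse)
lemma lin_diff: "lin_op f \<Longrightarrow> f (x - y) = f x - f y"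
  by (metis diff_conv_add_uminus lin_add lin_neg)

lemma lin_comp: "lin_op f \<Longrightarrow> lin_op g \<Longrightarrow> lin_op (f \<circ> g)"
  by (simp add: lin_op_def)
lemma lin_id: "lin_op id" by (simp add: lin_op_def)
lemma lin_sub: "lin_op f \<Longrightarrow> lin_op g \<Longrightarrow> lin_op (\<lambda>v. f v - g v)"
  by (simp add: lin_op_def V.scale_right_diff_distrib)
lemma lin_plus: "lin_op f \<Longrightarrow> lin_op g \<Longrightarrow> lin_op (\<lambda>v. f v + g v)"
  by (simp add: lin_op_def V.scale_right_distrib)
lemma lin_sc: "lin_op (\<lambda>v. sc c v)"
  by (simp add: lin_op_def V.scale_right_distrib V.scale_left_commute)
lemma lin_pow: "lin_op f \<Longrightarrow> lin_op (f ^^ j)"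
  by (induction j) (auto simp: lin_id lin_comp)

lemma gen_lin:
  assumes "a \<in> {1..n}"
  shows "lin_op (Psi a)" "lin_op (PsiS a)" "lin_op (Om a)" "lin_op (OmI a)"
proof -
  have "\<forall>a\<in>{1..n}. Vector_Spaces.linear sc sc (Psi a) \<and> Vector_Spaces.linear sc sc (PsiS a)
        \<and> Vector_Spaces.linear sc sc (Om a) \<and> Vector_Spaces.linear sc sc (OmI a)"
    using rep by (simp add: qcl_rep_def)
  hence "Vector_Spaces.linear sc sc (Psi a) \<and> Vector_Spaces.linear sc sc (PsiS a)
        \<and> Vector_Spaces.linear sc sc (Om a) \<and> Vector_Spaces.linear sc sc (OmI a)" using assms by blast
  thus "lin_op (Psi a)" "lin_op (PsiS a)" "lin_op (Om a)" "lin_op (OmI a)"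
    by (simp_all add: Vector_Spaces.linear_iff lin_op_def)
qed

lemma rels:
  assumes "a \<in> {1..n}" "b \<in> {1..n}"
  shows "Om a (Om b v) = Om b (Om a v)"
      "Om a (OmI a v) = v" "OmI a (Om a v) = v"
      "Om a (Psi b v) = sc (if a = b then q else 1) (Psi b (Om a v))"
      "Om a (PsiS b v) = sc (if a = b then inverse q else 1) (PsiS b (Om a v))"
      "Psi a (Psi b v) + Psi b (Psi a v) = 0"
      "PsiS a (PsiS b v) + PsiS b (PsiS a v) = 0"
      "Psi a (PsiS a v) + sc (q ^ k) (PsiS a (Psi a v)) = (OmI a ^^ k) v"
      "Psi a (PsiS a v) + sc (inverse q ^ k) (PsiS a (Psi a v)) = (Om a ^^ k) v"
      "a \<noteq> b \<Longrightarrow> Psi a (PsiS b v) + PsiS b (Psi a v) = 0"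
  using rep assms unfolding qcl_rep_def by blast+

lemma two_zero: fixes x :: 'v assumes "x + x = 0" shows "x = 0"
proof -
  have "sc 2 x = x + x" by (metis one_add_one V.scale_left_distrib V.scale_one)
  hence "sc 2 x = 0" using assms by simp
  hence "sc (inverse 2) (sc 2 x) = 0" by (metis V.scale_zero_right)
  moreover have "sc (inverse 2) (sc 2 x) = x" using two_nz by simp
  ultimately show ?thesis using two_nz by simp
qed

lemmas glin = gen_lin[THEN lin_add] gen_lin[THEN lin_scale] gen_lin[THEN lin_zero]
  gen_lin[THEN lin_neg] gen_lin[THEN lin_diff]


lemma PP: "a \<in> {1..n} \<Longrightarrow> Psi a (Psi a v) = 0"
  using rels(6)[of a a v] two_zero by blast
lemma SS: "a \<in> {1..n} \<Longrightarrow> PsiS a (PsiS a v) = 0"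
  using rels(7)[of a a v] two_zero by blast

lemma anti_PP: "a \<in> {1..n} \<Longrightarrow> b \<in> {1..n} \<Longrightarrow> Psi b (Psi a w) = - Psi a (Psi b w)"
  using rels(6)[of b a w] by (simp add: eq_neg_iff_add_eq_0)
lemma anti_SS: "a \<in> {1..n} \<Longrightarrow> b \<in> {1..n} \<Longrightarrow> PsiS b (PsiS a w) = - PsiS a (PsiS b w)"
  using rels(7)[of b a w] by (simp add: eq_neg_iff_add_eq_0)
lemma anti_PS: "a \<in> {1..n} \<Longrightarrow> b \<in> {1..n} \<Longrightarrow> a \<noteq> b \<Longrightarrow> Psi b (PsiS a w) = - PsiS a (Psi b w)"
  using rels(10)[of b a w] by (simp add: eq_neg_iff_add_eq_0)
lemma anti_SP: "a \<in> {1..n} \<Longrightarrow> b \<in> {1..n} \<Longrightarrow> a \<noteq> b \<Longrightarrow> PsiS b (Psi a w) = - Psi a (PsiS b w)"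
  using rels(10)[of a b w] by (simp add: eq_neg_iff_add_eq_0 add.commute)

lemma IO_pow: "a \<in> {1..n} \<Longrightarrow> (OmI a ^^ j) ((Om a ^^ j) v) = v"
proof (induction j arbitrary: v)
  case 0 then show ?case by simp
next
  case (Suc j)
  have "(OmI a ^^ Suc j) ((Om a ^^ Suc j) v) = (OmI a ^^ j) (OmI a (Om a ((Om a ^^ j) v)))"
    by (simp only: funpow_Suc_right[of j "OmI a"] funpow.simps(2)[of j "Om a"] comp_apply)
  also have "\<dots> = v" using Suc by (simp add: rels(3))
  finally show ?case .
qed

lemma SI1: assumes a: "a \<in> {1..n}" shows "PsiS a (OmI a u) = sc (inverse q) (OmI a (PsiS a u))"
proof -
  have "Om a (PsiS a (OmI a u)) = sc (inverse q) (PsiS a u)"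
    using rels(5)[OF a a, of "OmI a u"] rels(2)[OF a a] by simp
  hence "OmI a (Om a (PsiS a (OmI a u))) = OmI a (sc (inverse q) (PsiS a u))" by simp
  thus ?thesis using rels(3)[OF a a] glin a by simp
qed

lemma SI: assumes a: "a \<in> {1..n}"
  shows "PsiS a ((OmI a ^^ j) w) = sc (inverse q ^ j) ((OmI a ^^ j) (PsiS a w))"
proof (induction j)
  case 0 then show ?case by simp
next
  case (Suc j)
  have "PsiS a ((OmI a ^^ Suc j) w) = PsiS a (OmI a ((OmI a ^^ j) w))" by simp
  also have "\<dots> = sc (inverse q) (OmI a (PsiS a ((OmI a ^^ j) w)))" by (rule SI1[OF a])
  also have "\<dots> = sc (inverse q) (OmI a (sc (inverse q ^ j) ((OmI a ^^ j) (PsiS a w))))"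
    using Suc by simp
  also have "\<dots> = sc (inverse q ^ Suc j) ((OmI a ^^ Suc j) (PsiS a w))"
    using glin a by simp
  finally show ?case .
qed

lemma PSP: assumes a: "a \<in> {1..n}" shows "Psi a (PsiS a (Psi a v)) = (OmI a ^^ k) (Psi a v)"
  using rels(8)[OF a a, of "Psi a v"] PP[OF a] glin a by simp

definition Fa :: "nat \<Rightarrow> 'v \<Rightarrow> 'v" where "Fa a = op_comm (Psi a) (PsiS a)"

lemma Fa_lin: "a \<in> {1..n} \<Longrightarrow> lin_op (Fa a)"
  unfolding Fa_def op_comm_def
  by (rule lin_sub; rule lin_comp[unfolded comp_def]; simp add: gen_lin)

lemma Fa_sq: assumes a: "a \<in> {1..n}" shows "Fa a (Fa a v) = v"
proof -
  let ?X = "\<lambda>v. Psi a (PsiS a v)" and ?Y = "\<lambda>v. PsiS a (Psi a v)"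
  let ?I = "OmI a ^^ k"
  have Ilin: "lin_op ?I" by (rule lin_pow) (rule gen_lin(4)[OF a])
  have "Fa a (Fa a v) = ?X (?X v) - ?X (?Y v) - (?Y (?X v) - ?Y (?Y v))"
    unfolding Fa_def op_comm_def using glin a by simp
  also have "?X (?Y v) = 0" using SS a glin by simp
  also have "?Y (?X v) = 0" using PP a glin by simp
  also have "?X (?X v) = ?I (?X v)" using PSP[OF a, of "PsiS a v"] by simp
  also have "?Y (?Y v) = ?I (sc (inverse q ^ k) (?Y v))"
    using PSP[OF a, of v] SI[OF a, of k "Psi a v"] lin_scale[OF Ilin] by simp
  finally have "Fa a (Fa a v) = ?I (?X v + sc (inverse q ^ k) (?Y v))"
    using lin_add[OF Ilin] by simp
  also have "\<dots> = v" using rels(9)[OF a a] IO_pow[OF a] by simp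
  finally show ?thesis .
qed


lemma Fa_Psi_other: assumes a: "a \<in> {1..n}" and b: "b \<in> {1..n}" and ab: "a \<noteq> b"
  shows "Psi b (Fa a v) = Fa a (Psi b v)"
  unfolding Fa_def op_comm_def
  using a b ab glin anti_PP[OF a b] anti_PS[OF a b ab] by simp

lemma Fa_PsiS_other: assumes a: "a \<in> {1..n}" and b: "b \<in> {1..n}" and ab: "a \<noteq> b"
  shows "PsiS b (Fa a v) = Fa a (PsiS b v)"
  unfolding Fa_def op_comm_def
  using a b ab glin anti_SS[OF a b] anti_SP[OF a b ab] by simp

lemma Fa_Psi_same: assumes a: "a \<in> {1..n}"
  shows "Psi a (Fa a v) = - Fa a (Psi a v)"
  unfolding Fa_def op_comm_def using a glin PP[OF a] by simp

lemma Fa_PsiS_same: assumes a: "a \<in> {1..n}"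
  shows "PsiS a (Fa a v) = - Fa a (PsiS a v)"
  unfolding Fa_def op_comm_def using a glin SS[OF a] by simp

lemma Fa_Om: assumes a: "a \<in> {1..n}" and b: "b \<in> {1..n}"
  shows "Om b (Fa a v) = Fa a (Om b v)"
proof -
  have c: "sc (if b = a then q else 1) (sc (if b = a then inverse q else 1) w) = w" for w
    using q_nz by simp
  have c2: "sc (if b = a then inverse q else 1) (sc (if b = a then q else 1) w) = w" for w
    using q_nz by simp
  show ?thesis
    unfolding Fa_def op_comm_def
    using a b glin rels(4)[OF b a] rels(5)[OF b a] c c2 by simp
qed

lemma Fa_OmI: assumes a: "a \<in> {1..n}" and b: "b \<in> {1..n}"
  shows "OmI b (Fa a v) = Fa a (OmI b v)"
proof -
  have "OmI b (Fa a v) = OmI b (Fa a (Om b (OmI b v)))" using rels(2)[OF b b] by simp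
  also have "\<dots> = OmI b (Om b (Fa a (OmI b v)))" using Fa_Om[OF a b] by simp
  also have "\<dots> = Fa a (OmI b v)" using rels(3)[OF b b] by simp
  finally show ?thesis .
qed

definition G :: "nat list \<Rightarrow> 'v \<Rightarrow> 'v" where "G xs = foldr (\<lambda>a acc. Fa a \<circ> acc) xs id"

lemma G_simps: "G [] = id" "G (a # xs) = Fa a \<circ> G xs"
  by (simp_all add: G_def)

lemma G_lin: "set xs \<subseteq> {1..n} \<Longrightarrow> lin_op (G xs)"
  by (induction xs) (auto simp: G_simps lin_id intro!: lin_comp Fa_lin)

lemma G_Om: "set xs \<subseteq> {1..n} \<Longrightarrow> b \<in> {1..n} \<Longrightarrow> Om b (G xs v) = G xs (Om b v)"
  by (induction xs) (auto simp: G_simps Fa_Om)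
lemma G_OmI: "set xs \<subseteq> {1..n} \<Longrightarrow> b \<in> {1..n} \<Longrightarrow> OmI b (G xs v) = G xs (OmI b v)"
  by (induction xs) (auto simp: G_simps Fa_OmI)
lemma G_Psi_c: "set xs \<subseteq> {1..n} \<Longrightarrow> b \<in> {1..n} \<Longrightarrow> b \<notin> set xs \<Longrightarrow> Psi b (G xs v) = G xs (Psi b v)"
  by (induction xs) (auto simp: G_simps Fa_Psi_other)
lemma G_PsiS_c: "set xs \<subseteq> {1..n} \<Longrightarrow> b \<in> {1..n} \<Longrightarrow> b \<notin> set xs \<Longrightarrow> PsiS b (G xs v) = G xs (PsiS b v)"
  by (induction xs) (auto simp: G_simps Fa_PsiS_other)

lemma G_Psi_a: "set xs \<subseteq> {1..n} \<Longrightarrow> distinct xs \<Longrightarrow> b \<in> set xs \<Longrightarrow> Psi b (G xs v) = - G xs (Psi b v)"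
proof (induction xs arbitrary: v)
  case Nil then show ?case by simp
next
  case (Cons a xs)
  show ?case
  proof (cases "a = b")
    case True
    then show ?thesis using Cons.prems G_Psi_c[of xs b] by (auto simp: G_simps Fa_Psi_same)
  next
    case False
    then show ?thesis using Cons by (auto simp: G_simps Fa_Psi_other lin_neg[OF Fa_lin])
  qed
qed

lemma G_PsiS_a: "set xs \<subseteq> {1..n} \<Longrightarrow> distinct xs \<Longrightarrow> b \<in> set xs \<Longrightarrow> PsiS b (G xs v) = - G xs (PsiS b v)"
proof (induction xs arbitrary: v)
  case Nil then show ?case by simp
next
  case (Cons a xs)
  show ?case
  proof (cases "a = b")
    case True
    then show ?thesis using Cons.prems G_PsiS_c[of xs b] by (auto simp: G_simps Fa_PsiS_same)
  next
    case False
    then show ?thesis using Cons by (auto simp: G_simps Fa_PsiS_other lin_neg[OF Fa_lin])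
  qed
qed

lemma Fa_G: assumes "set xs \<subseteq> {1..n}" "a \<in> {1..n}" "a \<notin> set xs"
  shows "Fa a (G xs v) = G xs (Fa a v)"
  unfolding Fa_def op_comm_def
  using assms G_Psi_c G_PsiS_c lin_diff[OF G_lin[OF assms(1)]] by simp

lemma G_sq: "set xs \<subseteq> {1..n} \<Longrightarrow> distinct xs \<Longrightarrow> G xs (G xs v) = v"
proof (induction xs arbitrary: v)
  case Nil then show ?case by (simp add: G_simps)
next
  case (Cons a xs)
  have "G (a # xs) (G (a # xs) v) = Fa a (G xs (Fa a (G xs v)))" by (simp add: G_simps)
  also have "\<dots> = Fa a (Fa a (G xs (G xs v)))" using Cons.prems Fa_G[of xs a] by simp
  also have "\<dots> = v" using Cons Fa_sq by simp
  finally show ?case .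
qed


abbreviation FF where "FF \<equiv> G [1..<Suc n]"

lemma FF_lin: "lin_op FF" by (rule G_lin) auto
lemma FF_sq: "FF (FF v) = v" by (rule G_sq) auto

lemma FF_gen:
  assumes "a \<in> {1..n}"
  shows "Psi a (FF v) = - FF (Psi a v)" "PsiS a (FF v) = - FF (PsiS a v)"
    "Om a (FF v) = FF (Om a v)" "OmI a (FF v) = FF (OmI a v)"
  using assms by (auto intro!: G_Psi_a G_PsiS_a G_Om G_OmI simp del: upt_Suc)

lemma parity:
  "cl_even n e \<Longrightarrow> lin_op (cl_eval sc Psi PsiS Om OmI e) \<and>
     (\<forall>v. cl_eval sc Psi PsiS Om OmI e (FF v) = FF (cl_eval sc Psi PsiS Om OmI e v))"
  "cl_odd n e \<Longrightarrow> lin_op (cl_eval sc Psi PsiS Om OmI e) \<and>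
     (\<forall>v. cl_eval sc Psi PsiS Om OmI e (FF v) = - FF (cl_eval sc Psi PsiS Om OmI e v))"
proof (induction rule: cl_even_cl_odd.inducts)
  case (1 a) then show ?case using gen_lin FF_gen(1) by auto
next
  case (2 a) then show ?case using gen_lin FF_gen(2) by auto
next
  case (3 a) then show ?case using gen_lin FF_gen(3) by auto
next
  case (4 a) then show ?case using gen_lin FF_gen(4) by auto
next
  case 5 then show ?case using lin_id by (simp add: id_def)
next
  case (6 e c) then show ?case
    using lin_comp[OF lin_sc, unfolded comp_def] lin_scale[OF FF_lin] by auto
next
  case (7 e c) then show ?case
    using lin_comp[OF lin_sc, unfolded comp_def] lin_scale[OF FF_lin] V.scale_minus_right by auto
next
  case (8 e1 e2) then show ?case using lin_plus lin_add[OF FF_lin] by auto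
next
  case (9 e1 e2) then show ?case using lin_plus lin_add[OF FF_lin] by (auto simp: add.commute)
next
  case (10 e1 e2) then show ?case using lin_comp[unfolded comp_def] by (auto simp del: upt_Suc)
next
  case (11 e1 e2)
  then have L: "lin_op (cl_eval sc Psi PsiS Om OmI e1)" "lin_op (cl_eval sc Psi PsiS Om OmI e2)" by simp_all
  with 11 show ?case using lin_comp[unfolded comp_def] lin_neg[OF L(1)] lin_neg[OF FF_lin] by (auto simp del: upt_Suc)
next
  case (12 e1 e2)
  then have L: "lin_op (cl_eval sc Psi PsiS Om OmI e1)" "lin_op (cl_eval sc Psi PsiS Om OmI e2)" by simp_all
  with 12 show ?case using lin_comp[unfolded comp_def] lin_neg[OF L(1)] lin_neg[OF FF_lin] by (auto simp del: upt_Suc)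
next
  case (13 e1 e2)
  then have L: "lin_op (cl_eval sc Psi PsiS Om OmI e1)" "lin_op (cl_eval sc Psi PsiS Om OmI e2)" by simp_all
  with 13 show ?case using lin_comp[unfolded comp_def] lin_neg[OF L(1)] lin_neg[OF FF_lin] by (auto simp del: upt_Suc)
qed

end

theorem proposition4p7:
  fixes sc :: "'k::field \<Rightarrow> 'v::ab_group_add \<Rightarrow> 'v"
    and q :: 'k and n k :: nat
    and Psi PsiS Om OmI :: "nat \<Rightarrow> 'v \<Rightarrow> 'v"
  assumes char: "(2::'k) \<noteq> 0"
    and q: "q \<noteq> 0"
    and n: "n > 0" and k: "k > 0"
    and rep: "qcl_rep sc q n k Psi PsiS Om OmI"
    and irr: "qcl_irreducible sc n Psi PsiS Om OmI"
  defines "Wp \<equiv> range (\<lambda>v. v + qcl_fn n Psi PsiS v)"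
    and "Wm \<equiv> range (\<lambda>v. v - qcl_fn n Psi PsiS v)"
  shows "(\<forall>w. \<exists>x\<in>Wp. \<exists>y\<in>Wm. w = x + y) \<and> Wp \<inter> Wm = {0}
       \<and> (\<forall>e. cl_even n e \<longrightarrow> cl_eval sc Psi PsiS Om OmI e ` Wp \<subseteq> Wp
                           \<and> cl_eval sc Psi PsiS Om OmI e ` Wm \<subseteq> Wm)"
proof -
  interpret qr sc q n k Psi PsiS Om OmI using char q rep by unfold_locales
  have Fe: "qcl_fn n Psi PsiS = FF" unfolding qcl_fn_def G_def Fa_def ..
  have P1: "\<exists>x\<in>Wp. \<exists>y\<in>Wm. w = x + y" for w
  proof -
    let ?h = "sc (inverse 2) w"
    have "?h + ?h = sc (inverse 2 + inverse 2) w" by (rule V.scale_left_distrib[symmetric])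
    also have "inverse 2 + inverse 2 = (1::'k)"
      by (metis mult_2 right_inverse[OF char])
    finally have hh: "?h + ?h = w" by (metis V.scale_one)
    have "(?h + FF ?h) + (?h - FF ?h) = ?h + ?h" by (simp del: upt_Suc add: algebra_simps)
    hence "w = (?h + FF ?h) + (?h - FF ?h)" using hh by (simp del: upt_Suc)
    thus ?thesis unfolding Wp_def Wm_def Fe by blast
  qed
  have P2: "Wp \<inter> Wm = {0}"
  proof
    have z: "FF 0 = 0" by (rule lin_zero[OF FF_lin])
    have e1: "0 + FF 0 = 0" by (simp only: z add_0)
    have "(\<lambda>v. v + FF v) 0 \<in> range (\<lambda>v. v + FF v)" by (rule rangeI)
    hence "0 \<in> Wp" unfolding Wp_def Fe e1 .
    moreover have e2: "0 - FF 0 = 0" by (simp only: z diff_0_right)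
    have "(\<lambda>v. v - FF v) 0 \<in> range (\<lambda>v. v - FF v)" by (rule rangeI)
    hence "0 \<in> Wm" unfolding Wm_def Fe e2 .
    ultimately show "{0} \<subseteq> Wp \<inter> Wm" by blast
  next
    show "Wp \<inter> Wm \<subseteq> {0}"
    proof
      fix x assume "x \<in> Wp \<inter> Wm"
      then obtain u v where u: "x = u + FF u" and v: "x = v - FF v"
        unfolding Wp_def Wm_def Fe by blast
      have "FF x = FF u + FF (FF u)" unfolding u by (rule lin_add[OF FF_lin])
      hence a: "FF x = x" unfolding FF_sq u by (simp only: add.commute)
      have "FF x = FF v - FF (FF v)" unfolding v by (rule lin_diff[OF FF_lin])
      also have "\<dots> = FF v - v" by (simp only: FF_sq)
      also have "\<dots> = - (v - FF v)" by (rule minus_diff_eq[symmetric])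
      also have "\<dots> = - x" by (simp only: v)
      finally have b: "FF x = - x" .
      have "x = - x" using a b by (rule subst)
      hence "x + x = 0" using eq_neg_iff_add_eq_0 by blast
      hence "x = 0" by (rule two_zero)
      thus "x \<in> {0}" by simp
    qed
  qed
  have P3: "cl_eval sc Psi PsiS Om OmI e ` Wp \<subseteq> Wp \<and> cl_eval sc Psi PsiS Om OmI e ` Wm \<subseteq> Wm"
    if e: "cl_even n e" for e
  proof -
    let ?E = "cl_eval sc Psi PsiS Om OmI e"
    have L: "lin_op ?E" and C: "\<And>v. ?E (FF v) = FF (?E v)" using parity(1)[OF e] by auto
    have A: "?E (u + FF u) = ?E u + FF (?E u)" for u
      by (simp only: lin_add[OF L] C)
    have B: "?E (u - FF u) = ?E u - FF (?E u)" for u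
      by (simp only: lin_diff[OF L] C)
    show ?thesis
    proof (intro conjI subsetI)
      fix y assume "y \<in> ?E ` Wp"
      then obtain u where "y = ?E (u + FF u)" unfolding Wp_def Fe by blast
      hence yv: "y = ?E u + FF (?E u)" by (simp only: A)
      show "y \<in> Wp" unfolding Wp_def Fe by (rule image_eqI[where x="?E u"]) (rule yv, rule UNIV_I)
    next
      fix y assume "y \<in> ?E ` Wm"
      then obtain u where "y = ?E (u - FF u)" unfolding Wm_def Fe by blast
      hence yv: "y = ?E u - FF (?E u)" by (simp only: B)
      show "y \<in> Wm" unfolding Wm_def Fe by (rule image_eqI[where x="?E u"]) (rule yv, rule UNIV_I)
    qed
  qed
  show ?thesis using P1 P2 P3 by blast
qed

end
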